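(* Let $K\ge 2$, let $\mathcal{X}$ be an instance space, and let $\mathcal{D}$ be a joint distribution of $(X,Y)$ on $\mathcal{X}\times[K]$, where $[K]=\{1,\dots,K\}$. Write $M$ for the marginal distribution of $X$ and $\boldsymbol{\eta}(x)=(\mathbb{P}(Y=1\mid X=x),\dots,\mathbb{P}(Y=K\mid X=x))^\top$. Let $\overline{\mathcal{D}}$ be a joint distribution of $(X,\overline{Y})$ on $\mathcal{X}\times[K]$ with the same marginal $M$ of $X$ and with class-probability function $\overline{\boldsymbol{\eta}}(x)=(\mathbb{P}(\overline{Y}=1\mid X=x),\dots,\mathbb{P}(\overline{Y}=K\mid X=x))^\top$ satisfying $$\overline{\boldsymbol{\eta}}(x)=\mathbf{T}\boldsymbol{\eta}(x)\quad\text{for all }x,$$ where $\mathbf{T}\in\mathbb{R}^{K\times K}$ has $0$ on the diagonal and $\frac{1}{K-1}$ in every off-diagonal entry. Let $\mathbf{g}:\mathcal{X}\to\mathbb{R}^K$ be any decision function and $\ell:[K]\times\mathbb{R}^K\to\mathbb{R}_+$ any loss, and write $\boldsymbol{\ell}(\mathbf{g}(x))=(\ell(1,\mathbf{g}(x)),\dots,\ell(K,\mathbf{g}(x)))^\top$. Define the complementary loss $\overline{\ell}$ by $$\overline{\boldsymbol{\ell}}(\mathbf{g}(x))=\big(-(K-1)\mathbf{I}_K+\mathbf{1}\mathbf{1}^\top\big)\boldsymbol{\ell}(\mathbf{g}(x)),$$ equivalently $\overline{\ell}(k,\mathbf{g}(x))=-(K-1)\,\ell(k,\mathbf{g}(x))+\sum_{j=1}^K\ell(j,\mathbf{g}(x))$,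 where $\mathbf{I}_K$ is the $K\times K$ identity and $\mathbf{1}$ the all-ones vector in $\mathbb{R}^K$. Then $$R(\mathbf{g};\ell):=\mathbb{E}_{(X,Y)\sim\mathcal{D}}[\ell(Y,\mathbf{g}(X))]=\overline{R}(\mathbf{g};\overline{\ell}):=\mathbb{E}_{(X,\overline{Y})\sim\overline{\mathcal{D}}}[\overline{\ell}(\overline{Y},\mathbf{g}(X))].$$
   Context: $\overline{Y}$ is a "complementary label": a class that the pattern does not belong to. The relation $\overline{\boldsymbol{\eta}}=\mathbf{T}\boldsymbol{\eta}$ means that, given $x$, the complementary label is drawn uniformly among the $K-1$ classes other than the true one. *)

theory Defs
  imports "HOL-Probability.Probability"
begin

definition T_mat :: "nat \<Rightarrow> nat \<Rightarrow> nat \<Rightarrow> real" where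
  "T_mat K i j = (if i = j then 0 else 1 / (real K - 1))"

definition L_mat :: "nat \<Rightarrow> nat \<Rightarrow> nat \<Rightarrow> real" where
  "L_mat K i j = - (real K - 1) * (if i = j then 1 else 0) + 1"

definition comp_loss :: "nat \<Rightarrow> (nat \<Rightarrow> 'v \<Rightarrow> real) \<Rightarrow> nat \<Rightarrow> 'v \<Rightarrow> real" where
  "comp_loss K l k v = (\<Sum>j\<in>{1..K}. L_mat K k j * l j v)"

text \<open>eta is (a version of) the class-probability function of D with respect to the
  marginal M: eta x k = P(Y = k | X = x), i.e. P(X \<in> A, Y = k) = int_A eta(x)_k dM(x).\<close>
definition class_prob :: "nat \<Rightarrow> 'a measure \<Rightarrow> ('a \<times> nat) measure \<Rightarrow> ('a \<Rightarrow> nat \<Rightarrow> real) \<Rightarrow> bool" where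
  "class_prob K M D \<eta> \<longleftrightarrow>
     (\<forall>k\<in>{1..K}. (\<lambda>x. \<eta> x k) \<in> borel_measurable M \<and> (\<forall>x\<in>space M. 0 \<le> \<eta> x k) \<and>
        (\<forall>A\<in>sets M. emeasure D (A \<times> {k}) = (\<integral>\<^sup>+ x\<in>A. ennreal (\<eta> x k) \<partial>M)))"

end

theory Submission imports Defs begin

lemma decomp:
  fixes M :: "'a measure" and D :: "('a \<times> nat) measure" and f :: "'a \<times> nat \<Rightarrow> real"
  assumes D: "finite_measure D" and sD: "sets D = sets (M \<Otimes>\<^sub>M count_space {1..K})"
   and M: "sigma_finite_measure M" and cp: "class_prob K M D \<eta>" and f: "integrable D f"
  shows "(\<forall>k\<in>{1..K}. integrable M (\<lambda>x. \<eta> x k * f (x,k))) \<and>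
     integral\<^sup>L D f = (\<Sum>k\<in>{1..K}. \<integral>x. \<eta> x k * f (x,k) \<partial>M)"
proof -
  let ?C = "count_space {1..K} :: nat measure"
  interpret M: sigma_finite_measure M by fact
  interpret C: finite_measure ?C by (rule finite_measure_count_space) simp
  interpret P: pair_sigma_finite M ?C ..
  interpret D: finite_measure D by fact
  define h where "h z = \<eta> (fst z) (snd z)" for z
  have etam: "\<And>k. k \<in> {1..K} \<Longrightarrow> (\<lambda>x. \<eta> x k) \<in> borel_measurable M"
   and etann: "\<And>k x. k \<in> {1..K} \<Longrightarrow> x \<in> space M \<Longrightarrow> 0 \<le> \<eta> x k"
   and etaD: "\<And>k A. k \<in> {1..K} \<Longrightarrow> A \<in> sets M \<Longrightarrow> emeasure D (A \<times> {k}) = (\<integral>\<^sup>+ x\<in>A. ennreal (\<eta> x k) \<partial>M)"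
    using cp by (auto simp: class_prob_def)
  have hm: "h \<in> borel_measurable (M \<Otimes>\<^sub>M ?C)"
    unfolding h_def
  proof (rule measurable_compose_countable'[where f="\<lambda>k z. \<eta> (fst z) k" and g=snd and I="{1..K}"])
    fix k assume "k \<in> {1..K}"
    then show "(\<lambda>z. \<eta> (fst z) k) \<in> borel_measurable (M \<Otimes>\<^sub>M ?C)"
      using etam by (intro measurable_compose[OF measurable_fst]) auto
  qed auto
  have hnn: "AE z in M \<Otimes>\<^sub>M ?C. 0 \<le> h z"
    by (rule AE_I2) (auto simp: space_pair_measure h_def etann)
  define N where "N = density (M \<Otimes>\<^sub>M ?C) (\<lambda>z. ennreal (h z))"
  have spD: "space D = space M \<times> {1..K}"
    using sets_eq_imp_space_eq[OF sD] by (simp add: space_pair_measure)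
  have eqN: "D = N"
  proof (rule measure_eqI_generator_eq[OF Int_stable_pair_measure_generator[of M ?C],
        where \<Omega> = "space M \<times> {1..K}" and A="\<lambda>_. space M \<times> {1..K}"])
    show "{a \<times> b |a b. a \<in> sets M \<and> b \<in> sets ?C} \<subseteq> Pow (space M \<times> {1..K})"
      using sets.sets_into_space by fastforce
    show "sets D = sigma_sets (space M \<times> {1..K}) {a \<times> b |a b. a \<in> sets M \<and> b \<in> sets ?C}"
      using sD by (simp add: sets_pair_measure)
    show "sets N = sigma_sets (space M \<times> {1..K}) {a \<times> b |a b. a \<in> sets M \<and> b \<in> sets ?C}"
      by (simp add: N_def sets_pair_measure)
    show "range (\<lambda>_. space M \<times> {1..K}) \<subseteq> {a \<times> b |a b. a \<in> sets M \<and> b \<in> sets ?C}"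
      by auto
    show "(\<Union>i::nat. space M \<times> {1..K}) = space M \<times> {1..K}" by simp
    show "\<And>i::nat. emeasure D (space M \<times> {1..K}) \<noteq> \<infinity>"
      by simp
  next
    fix X assume "X \<in> {a \<times> b |a b. a \<in> sets M \<and> b \<in> sets ?C}"
    then obtain A B where X: "X = A \<times> B" and A: "A \<in> sets M" and B: "B \<subseteq> {1..K}" by auto
    have fB: "finite B" using B finite_subset by blast
    have "X = (\<Union>k\<in>B. A \<times> {k})" using X by auto
    then have "emeasure D X = emeasure D (\<Union>k\<in>B. A \<times> {k})" by simp
    also have "\<dots> = (\<Sum>k\<in>B. emeasure D (A \<times> {k}))"
    proof (rule sum_emeasure[symmetric])
      show "(\<lambda>k. A \<times> {k}) ` B \<subseteq> sets D" using A B sD by auto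
      show "disjoint_family_on (\<lambda>k. A \<times> {k}) B" by (auto simp: disjoint_family_on_def)
    qed (rule fB)
    also have "\<dots> = (\<Sum>k\<in>B. \<integral>\<^sup>+ x. ennreal (\<eta> x k) * indicator A x \<partial>M)"
      using B A by (intro sum.cong refl) (auto simp: etaD)
    also have "\<dots> = (\<Sum>k\<in>{1..K}. \<integral>\<^sup>+ x. ennreal (\<eta> x k) * indicator (A \<times> B) (x, k) \<partial>M)"
      using B by (intro sum.mono_neutral_cong_left) (auto simp: indicator_def)
    also have "\<dots> = (\<integral>\<^sup>+ x. (\<Sum>k\<in>{1..K}. ennreal (\<eta> x k) * indicator (A \<times> B) (x, k)) \<partial>M)"
      using A B etam by (intro nn_integral_sum[symmetric]) auto
    also have "\<dots> = (\<integral>\<^sup>+ x. \<integral>\<^sup>+ k. ennreal (h (x, k)) * indicator X (x, k) \<partial>?C \<partial>M)"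
      by (simp add: nn_integral_count_space_finite h_def X)
    also have "\<dots> = (\<integral>\<^sup>+ z. ennreal (h z) * indicator X z \<partial>(M \<Otimes>\<^sub>M ?C))"
    proof -
      have "(\<lambda>z. ennreal (h z) * indicator X z) \<in> borel_measurable (M \<Otimes>\<^sub>M ?C)"
        using hm A B X by (intro borel_measurable_times_ennreal) (auto intro!: borel_measurable_indicator simp: sets_pair_measure)
      from C.nn_integral_fst[OF this] show ?thesis by simp
    qed
    also have "\<dots> = emeasure N X"
      using A B X hm unfolding N_def
      by (subst emeasure_density) (auto simp: sets_pair_measure intro!: sigma_sets.Basic)
    finally show "emeasure D X = emeasure N X" .
  qed
  have fm: "f \<in> borel_measurable (M \<Otimes>\<^sub>M ?C)"
    using borel_measurable_integrable[OF f] measurable_cong_sets[OF sD refl] by blast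
  have fN: "integrable N f" using f eqN by simp
  have int: "integrable (M \<Otimes>\<^sub>M ?C) (\<lambda>z. h z *\<^sub>R f z)"
    using fN unfolding N_def by (subst (asm) integrable_density[OF fm hm hnn])
  have int': "integrable (M \<Otimes>\<^sub>M ?C) (case_prod (\<lambda>x k. \<eta> x k * f (x, k)))"
    using int by (simp add: h_def split_beta')
  have "AE k in ?C. integrable M (\<lambda>x. \<eta> x k * f (x, k))"
    by (rule P.AE_integrable_snd[OF int'])
  then have I: "\<forall>k\<in>{1..K}. integrable M (\<lambda>x. \<eta> x k * f (x,k))"
    by (simp add: AE_count_space)
  have "integral\<^sup>L D f = integral\<^sup>L N f" using eqN by simp
  also have "\<dots> = integral\<^sup>L (M \<Otimes>\<^sub>M ?C) (\<lambda>z. h z *\<^sub>R f z)"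
    unfolding N_def by (rule integral_density[OF fm hm hnn])
  also have "\<dots> = integral\<^sup>L (M \<Otimes>\<^sub>M ?C) (case_prod (\<lambda>x k. \<eta> x k * f (x, k)))"
    by (simp add: h_def split_beta')
  also have "\<dots> = (\<integral>k. (\<integral>x. \<eta> x k * f (x, k) \<partial>M) \<partial>?C)"
    by (rule P.integral_snd[OF int', symmetric])
  also have "\<dots> = (\<Sum>k\<in>{1..K}. \<integral>x. \<eta> x k * f (x,k) \<partial>M)"
    by (simp add: lebesgue_integral_count_space_finite)
  finally show ?thesis using I by blast
qed

lemma alg1: "(c::real) \<noteq> 0 \<Longrightarrow> (Se - e) / c * (Sl - c * l) = Se * Sl / c - Se * l - Sl * e / c + e * l"
  by (simp add: field_simps)

lemma pointwise:
  fixes e l :: "nat \<Rightarrow> real"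
  assumes K: "K \<ge> 2"
  shows "(\<Sum>i\<in>{1..K}. (\<Sum>j\<in>{1..K}. T_mat K i j * e j) * (\<Sum>m\<in>{1..K}. L_mat K i m * l m))
        = (\<Sum>i\<in>{1..K}. e i * l i)"
proof -
  define Se where "Se = (\<Sum>j\<in>{1..K}. e j)"
  define Sl where "Sl = (\<Sum>j\<in>{1..K}. l j)"
  have K1: "real K - 1 \<noteq> 0" using K by simp
  have h1: "(\<Sum>j\<in>{1..K}. T_mat K i j * e j) = (Se - e i) / (real K - 1)" if i: "i \<in> {1..K}" for i
  proof -
    have "(\<Sum>j\<in>{1..K}. T_mat K i j * e j) = (\<Sum>j\<in>{1..K}. e j / (real K - 1) - (if j = i then e j / (real K - 1) else 0))"
      by (intro sum.cong) (auto simp: T_mat_def)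
    also have "\<dots> = Se / (real K - 1) - e i / (real K - 1)"
      using i by (simp add: sum_subtractf Se_def sum_divide_distrib)
    finally show ?thesis by (simp add: diff_divide_distrib)
  qed
  have h2: "(\<Sum>m\<in>{1..K}. L_mat K i m * l m) = Sl - (real K - 1) * l i" if i: "i \<in> {1..K}" for i
  proof -
    have "(\<Sum>m\<in>{1..K}. L_mat K i m * l m) = (\<Sum>m\<in>{1..K}. l m - (if m = i then (real K - 1) * l m else 0))"
      by (intro sum.cong) (auto simp: L_mat_def algebra_simps)
    also have "\<dots> = Sl - (real K - 1) * l i"
      using i by (simp add: sum_subtractf Sl_def)
    finally show ?thesis .
  qed
  have "(\<Sum>i\<in>{1..K}. (\<Sum>j\<in>{1..K}. T_mat K i j * e j) * (\<Sum>m\<in>{1..K}. L_mat K i m * l m))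
     = (\<Sum>i\<in>{1..K}. (Se - e i) / (real K - 1) * (Sl - (real K - 1) * l i))"
    by (intro sum.cong refl) (simp only: h1 h2)
  also have "\<dots> = (\<Sum>i\<in>{1..K}. Se * Sl / (real K - 1) - Se * l i - Sl * e i / (real K - 1) + e i * l i)"
    using K1 by (intro sum.cong refl) (rule alg1)
  also have "\<dots> = real K * Se * Sl / (real K - 1) - Se * Sl - Sl * Se / (real K - 1) + (\<Sum>i\<in>{1..K}. e i * l i)"
    by (simp add: sum.distrib sum_subtractf sum_distrib_left[symmetric] sum_divide_distrib[symmetric] Se_def Sl_def)
  also have "\<dots> = (\<Sum>i\<in>{1..K}. e i * l i)"
    using K1 by (simp add: field_simps)
  finally show ?thesis .
qed
theorem theorem1:
  fixes K :: nat and M :: "'a measure" and D Dbar :: "('a \<times> nat) measure"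
    and \<eta> \<eta>bar :: "'a \<Rightarrow> nat \<Rightarrow> real"
    and g :: "'a \<Rightarrow> (nat \<Rightarrow> real)" and l :: "nat \<Rightarrow> (nat \<Rightarrow> real) \<Rightarrow> real"
  assumes "K \<ge> 2"
    and "prob_space D" and "sets D = sets (M \<Otimes>\<^sub>M count_space {1..K})"
    and "distr D M fst = M" and "class_prob K M D \<eta>"
    and "prob_space Dbar" and "sets Dbar = sets (M \<Otimes>\<^sub>M count_space {1..K})"
    and "distr Dbar M fst = M" and "class_prob K M Dbar \<eta>bar"
    and "\<forall>x\<in>space M. \<forall>i\<in>{1..K}. \<eta>bar x i = (\<Sum>j\<in>{1..K}. T_mat K i j * \<eta> x j)"
    and "\<forall>k v. 0 \<le> l k v"
    and "integrable D (\<lambda>(x, y). l y (g x))"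
    and "integrable Dbar (\<lambda>(x, y). comp_loss K l y (g x))"
  shows "(\<integral>(x, y). l y (g x) \<partial>D) = (\<integral>(x, y). comp_loss K l y (g x) \<partial>Dbar)"
proof -
  have fstm: "fst \<in> measurable D M"
    using measurable_cong_sets[OF assms(3) refl] measurable_fst by blast
  have "prob_space (distr D M fst)"
    using assms(2) fstm by (rule prob_space.prob_space_distr)
  then have PM: "prob_space M" using assms(4) by simp
  then have SM: "sigma_finite_measure M"
    by (simp add: prob_space_imp_sigma_finite)
  have A: "(\<forall>k\<in>{1..K}. integrable M (\<lambda>x. \<eta> x k * (\<lambda>(x, y). l y (g x)) (x,k))) \<and>
     integral\<^sup>L D (\<lambda>(x, y). l y (g x)) = (\<Sum>k\<in>{1..K}. \<integral>x. \<eta> x k * (\<lambda>(x, y). l y (g x)) (x,k) \<partial>M)"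
    using assms(2,3,5,12) SM by (intro decomp) (auto simp: prob_space_def)
  have B: "(\<forall>k\<in>{1..K}. integrable M (\<lambda>x. \<eta>bar x k * (\<lambda>(x, y). comp_loss K l y (g x)) (x,k))) \<and>
     integral\<^sup>L Dbar (\<lambda>(x, y). comp_loss K l y (g x)) = (\<Sum>k\<in>{1..K}. \<integral>x. \<eta>bar x k * (\<lambda>(x, y). comp_loss K l y (g x)) (x,k) \<partial>M)"
    using assms(6,7,9,13) SM by (intro decomp) (auto simp: prob_space_def)
  have "(\<integral>(x, y). l y (g x) \<partial>D) = (\<Sum>k\<in>{1..K}. \<integral>x. \<eta> x k * l k (g x) \<partial>M)"
    using A by simp
  also have "\<dots> = (\<integral>x. (\<Sum>k\<in>{1..K}. \<eta> x k * l k (g x)) \<partial>M)"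
    using A by (subst Bochner_Integration.integral_sum[where I="{1..K}" and f="\<lambda>k x. \<eta> x k * l k (g x)"]) auto
  also have "\<dots> = (\<integral>x. (\<Sum>k\<in>{1..K}. \<eta>bar x k * comp_loss K l k (g x)) \<partial>M)"
  proof (rule Bochner_Integration.integral_cong[OF refl])
    fix x assume x: "x \<in> space M"
    have "(\<Sum>k\<in>{1..K}. \<eta>bar x k * comp_loss K l k (g x))
       = (\<Sum>i\<in>{1..K}. (\<Sum>j\<in>{1..K}. T_mat K i j * \<eta> x j) * (\<Sum>m\<in>{1..K}. L_mat K i m * l m (g x)))"
      using x assms(10) by (intro sum.cong refl) (simp add: comp_loss_def)
    also have "\<dots> = (\<Sum>k\<in>{1..K}. \<eta> x k * l k (g x))"
      by (rule pointwise[OF assms(1)])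
    finally show "(\<Sum>k\<in>{1..K}. \<eta> x k * l k (g x)) = (\<Sum>k\<in>{1..K}. \<eta>bar x k * comp_loss K l k (g x))" by simp
  qed
  also have "\<dots> = (\<Sum>k\<in>{1..K}. \<integral>x. \<eta>bar x k * comp_loss K l k (g x) \<partial>M)"
    using B by (subst Bochner_Integration.integral_sum[where I="{1..K}" and f="\<lambda>k x. \<eta>bar x k * comp_loss K l k (g x)"]) auto
  also have "\<dots> = (\<integral>(x, y). comp_loss K l y (g x) \<partial>Dbar)"
    using B by simp
  finally show ?thesis .
qed

end
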